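(* Let $K>1$ and define the asymmetric softmax $\tilde{\bm{\psi}}:\mathbb{R}^{K+1}\to\mathbb{R}^{K+1}$ by $$\tilde{\psi}_y(\bm{u})=\frac{\exp(u_y)}{\sum_{y'=1}^{K}\exp(u_{y'})}\ \ (1\le y\le K),\qquad \tilde{\psi}_{K+1}(\bm{u})=\frac{\exp(u_{K+1})}{\sum_{y'=1}^{K+1}\exp(u_{y'})-\max_{y'\in\{1,\dots,K\}}\exp(u_{y'})}.$$ Then for every $\bm{u}\in\mathbb{R}^{K+1}$: (i) $\tilde{\bm{\psi}}(\bm{u})\in\Delta^K\times[0,1]$; (ii) $\mathop{\rm argmax}_{y\in\{1,\dots,K+1\}}\tilde{\psi}_y(\bm{u})=\mathop{\rm argmax}_{y\in\{1,\dots,K+1\}}u_y$.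
   Context: $\Delta^K$ denotes the probability simplex $\{\bm{p}\in\mathbb{R}^K:p_y\ge0,\ \sum_y p_y=1\}$; $\Delta^K\times[0,1]$ means the first $K$ coordinates lie in $\Delta^K$ and the last in $[0,1]$. *)

theory Defs
  imports Complex_Main
begin

text \<open>Asymmetric softmax on R^(K+1); vectors are functions nat => real, indices 1..K+1.\<close>
definition asym_softmax :: "nat \<Rightarrow> (nat \<Rightarrow> real) \<Rightarrow> nat \<Rightarrow> real" where
  "asym_softmax K u y =
     (if y = K + 1 then
        exp (u (K+1)) / ((\<Sum>y'=1..K+1. exp (u y')) - Max ((\<lambda>y'. exp (u y')) ` {1..K}))
      else exp (u y) / (\<Sum>y'=1..K. exp (u y')))"

definition argmax_set :: "'a set \<Rightarrow> ('a \<Rightarrow> real) \<Rightarrow> 'a set" where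
  "argmax_set A f = {y \<in> A. \<forall>y'\<in>A. f y' \<le> f y}"

end

theory Submission
  imports Defs
begin

lemma key1:
  fixes M E S :: real
  assumes "S - M > 0" "E > 0" "M > 0"
  shows "M / S \<le> E / (S + E - M) \<longleftrightarrow> M \<le> E"
proof -
  have "M / S \<le> E / (S + E - M) \<longleftrightarrow> M * (S + E - M) \<le> E * S"
    using assms by (simp add: divide_simps)
  also have "\<dots> \<longleftrightarrow> (M - E) * (S - M) \<le> 0" by (simp add: algebra_simps)
  also have "\<dots> \<longleftrightarrow> M \<le> E" using assms(1)
    by (simp add: mult_le_0_iff)
  finally show ?thesis .
qed

lemma key2:
  fixes M E S :: real
  assumes "S - M > 0" "E > 0" "M > 0"
  shows "E / (S + E - M) \<le> M / S \<longleftrightarrow> E \<le> M"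
proof -
  have "E / (S + E - M) \<le> M / S \<longleftrightarrow> E * S \<le> M * (S + E - M)"
    using assms by (simp add: divide_simps)
  also have "\<dots> \<longleftrightarrow> 0 \<le> (M - E) * (S - M)" by (simp add: algebra_simps)
  also have "\<dots> \<longleftrightarrow> E \<le> M" using assms(1)
    by (simp add: zero_le_mult_iff)
  finally show ?thesis .
qed

theorem proposition1:
  fixes K :: nat and u :: "nat \<Rightarrow> real"
  assumes "K > 1"
  shows "(\<forall>y\<in>{1..K}. asym_softmax K u y \<ge> 0)
       \<and> (\<Sum>y=1..K. asym_softmax K u y) = 1
       \<and> 0 \<le> asym_softmax K u (K+1) \<and> asym_softmax K u (K+1) \<le> 1
       \<and> argmax_set {1..K+1} (asym_softmax K u) = argmax_set {1..K+1} u"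
proof -
  define e where "e y = exp (u y)" for y
  define S where "S = (\<Sum>y'=1..K. e y')"
  define M where "M = Max (e ` {1..K})"
  define E where "E = e (K+1)"
  have Epos: "E > 0" unfolding E_def e_def by simp
  have ne: "e ` {1..K} \<noteq> {}" using assms by auto
  have Min: "M \<in> e ` {1..K}" unfolding M_def using ne by (intro Max_in) auto
  then obtain j where j: "j \<in> {1..K}" "e j = M" by auto
  have Mpos: "M > 0" using j unfolding e_def by auto
  have leM: "e y \<le> M" if "y \<in> {1..K}" for y unfolding M_def using that by (intro Max_ge) auto
  obtain k where k: "k \<in> {1..K}" "k \<noteq> j"
  proof (cases "j = 1")
    case True then show ?thesis using that[of 2] assms by auto
  next
    case False then show ?thesis using that[of 1] assms j by auto
  qed
  have "S = e j + (\<Sum>y'\<in>{1..K} - {j}. e y')" unfolding S_def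
    using j by (simp add: sum.remove)
  moreover have "e k \<le> (\<Sum>y'\<in>{1..K} - {j}. e y')"
    using k by (intro member_le_sum) (auto simp: e_def)
  moreover have "e k > 0" unfolding e_def by simp
  ultimately have SM: "S - M > 0" using j by linarith
  have Spos: "S > 0" using SM Mpos by linarith
  have sum1: "(\<Sum>y'=1..K+1. e y') = S + E" unfolding S_def E_def by simp
  have psi_lo: "asym_softmax K u y = e y / S" if "y \<in> {1..K}" for y
    using that unfolding asym_softmax_def S_def e_def by auto
  have psi_hi: "asym_softmax K u (K+1) = E / (S + E - M)"
    unfolding asym_softmax_def using sum1 by (simp add: e_def M_def S_def E_def)
  have D: "S + E - M > 0" using SM Epos by linarith
  have i1: "\<forall>y\<in>{1..K}. asym_softmax K u y \<ge> 0"
    using psi_lo Spos by (simp add: e_def)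
  have i2: "(\<Sum>y=1..K. asym_softmax K u y) = 1"
  proof -
    have "(\<Sum>y=1..K. asym_softmax K u y) = (\<Sum>y=1..K. e y / S)"
      by (intro sum.cong) (auto simp: psi_lo)
    also have "\<dots> = S / S" unfolding S_def by (simp only: sum_divide_distrib[symmetric])
    finally show ?thesis using Spos by simp
  qed
  have i3: "0 \<le> asym_softmax K u (K+1)" using psi_hi Epos D by simp
  have i4: "asym_softmax K u (K+1) \<le> 1" using psi_hi Epos D SM by simp
  have eu: "e a \<le> e b \<longleftrightarrow> u a \<le> u b" for a b unfolding e_def by simp
  have ch: "(\<forall>y'\<in>{1..K+1}. asym_softmax K u y' \<le> asym_softmax K u y)
        \<longleftrightarrow> (\<forall>y'\<in>{1..K+1}. u y' \<le> u y)" if y: "y \<in> {1..K+1}" for y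
  proof (cases "y = K+1")
    case True
    have "(\<forall>y'\<in>{1..K+1}. asym_softmax K u y' \<le> asym_softmax K u y)
        \<longleftrightarrow> (\<forall>y'\<in>{1..K}. e y' / S \<le> E / (S + E - M))"
      using True psi_lo psi_hi by (auto simp: atLeastAtMostSuc_conv)
    also have "\<dots> \<longleftrightarrow> M / S \<le> E / (S + E - M)"
    proof
      assume "\<forall>y'\<in>{1..K}. e y' / S \<le> E / (S + E - M)"
      then show "M / S \<le> E / (S + E - M)" using j by metis
    next
      assume h: "M / S \<le> E / (S + E - M)"
      show "\<forall>y'\<in>{1..K}. e y' / S \<le> E / (S + E - M)"
      proof
        fix y' assume "y' \<in> {1..K}"
        then have "e y' / S \<le> M / S" using leM Spos by (simp add: divide_right_mono)
        then show "e y' / S \<le> E / (S + E - M)" using h by linarith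
      qed
    qed
    also have "\<dots> \<longleftrightarrow> M \<le> E" using key1 SM Epos Mpos by blast
    also have "\<dots> \<longleftrightarrow> (\<forall>y'\<in>{1..K}. e y' \<le> E)" using j leM by force
    also have "\<dots> \<longleftrightarrow> (\<forall>y'\<in>{1..K+1}. u y' \<le> u y)"
      using True by (auto simp: atLeastAtMostSuc_conv E_def eu)
    finally show ?thesis .
  next
    case False
    then have yK: "y \<in> {1..K}" using y by auto
    have "(\<forall>y'\<in>{1..K+1}. asym_softmax K u y' \<le> asym_softmax K u y)
        \<longleftrightarrow> (\<forall>y'\<in>{1..K}. e y' / S \<le> e y / S) \<and> E / (S + E - M) \<le> e y / S"
      using yK psi_lo psi_hi by (auto simp: atLeastAtMostSuc_conv)
    also have "\<dots> \<longleftrightarrow> (\<forall>y'\<in>{1..K}. e y' \<le> e y) \<and> E / (S + E - M) \<le> e y / S"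
      using Spos by (simp add: divide_le_cancel)
    also have "\<dots> \<longleftrightarrow> (\<forall>y'\<in>{1..K}. e y' \<le> e y) \<and> E \<le> e y"
    proof (cases "\<forall>y'\<in>{1..K}. e y' \<le> e y")
      case True
      then have "e y = M" using j leM yK by (metis order.antisym)
      then show ?thesis using True key2[OF SM Epos Mpos] by simp
    qed blast
    also have "\<dots> \<longleftrightarrow> (\<forall>y'\<in>{1..K+1}. u y' \<le> u y)"
      by (auto simp: atLeastAtMostSuc_conv E_def eu)
    finally show ?thesis .
  qed
  have i5: "argmax_set {1..K+1} (asym_softmax K u) = argmax_set {1..K+1} u"
    unfolding argmax_set_def using ch by blast
  show ?thesis using i1 i2 i3 i4 i5 by blast
qed

end
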